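(* Let $\Theta$ be a standard bunch in $(E\xrightarrow{Q}K,\gamma)$. Then $\mathcal O(X_\Theta)=\mathbb K$ (only constant global regular functions) if and only if $Q$ maps no ray of $\gamma$ to $\{0\}$ and the image $Q(\gamma)$ is strictly convex.
   Context: Work over an algebraically closed field $\mathbb K$ of characteristic zero. Lattices are finitely generated free abelian groups; cones are convex polyhedral; $\tau^\circ$ relative interior, $\preceq$ face relation, $\mathrm{lin}$ linear span. A projected cone $(E\xrightarrow{Q}K,\gamma)$ is a surjective lattice map with a simplicial full-dimensional cone $\gamma\subset E_{\mathbb Q}$; its dual is $(F\xrightarrow{P}N,\delta)$ with $F=\mathrm{Hom}(E,\mathbb Z)$, $N=\mathrm{Hom}(\ker Q,\mathbb Z)$, $P$ restriction, $\delta=\gamma^\vee$; $\gamma_0^*:=\gamma_0^\perp\cap\delta$. A bunch is a nonempty set $\Theta$ of projected faces $Q(\gamma_0)$, $\gamma_0\preceq\gamma$, such that a projected face $\tau_0$ lies in $\Theta$ iff $\emptyset\ne\tau_0^\circ\cap\tau^\circ\ne\tau^\circ$ for all $\tau\in\Theta\setminus\{\tau_0\}$; $\mathrm{cov}(\Theta)$ is the set of faces $\gamma_0\preceq\gamma$ minimal with $Q(\gamma_0)\supseteq\tau$ for some $\tau\in\Theta$. $\Theta$ is standard if for every facet $\gamma_i$ of $\gamma$: $K=Q(\mathrm{lin}(\gamma_i)\cap E)$ and some $\tau\in\Theta$ has $\tau^\circ\subset Q(\gamma_i)^\circ$. For standard $\Theta$, the cones $P(\sigma)$, $\sigma\preceq\gamma_0^*$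 with $\gamma_0\in\mathrm{cov}(\Theta)$, form a fan $\Delta(\Theta)$ in $N$, and $X_\Theta$ is its toric variety. *)

theory Defs
  imports "HOL-Analysis.Analysis" "HOL-Computational_Algebra.Polynomial"
begin

text \<open>Coordinates: E = F = integral points of real^'r (F paired with E by the dot product,
  i.e. the dual basis), K = integral points of real^'k. Rational cones are modelled as
  real cones with integral generators.\<close>

definition lattice_pts :: "(real^'n) set" where
  "lattice_pts = {x. \<forall>i. x $ i \<in> \<int>}"

definition int_matrix :: "real^'r^'k \<Rightarrow> bool" where
  "int_matrix Q \<longleftrightarrow> (\<forall>i j. Q $ i $ j \<in> \<int>)"

definition gen_cone :: "(real^'n) set \<Rightarrow> (real^'n) set" where
  "gen_cone B = {x. \<exists>c. (\<forall>b\<in>B. 0 \<le> c b) \<and> x = (\<Sum>b\<in>B. c b *\<^sub>R b)}"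

definition projected_cone :: "real^'r^'k \<Rightarrow> (real^'r) set \<Rightarrow> bool" where
  "projected_cone Q \<gamma> \<longleftrightarrow> int_matrix Q \<and>
     (\<lambda>x. Q *v x) ` lattice_pts = lattice_pts \<and>
     (\<exists>B. independent B \<and> card B = CARD('r) \<and> B \<subseteq> lattice_pts \<and> \<gamma> = gen_cone B)"

definition cone_face :: "('a::real_vector) set \<Rightarrow> 'a set \<Rightarrow> bool" where
  "cone_face g C \<longleftrightarrow> g face_of C \<and> g \<noteq> {}"

definition proj_faces :: "real^'r^'k \<Rightarrow> (real^'r) set \<Rightarrow> (real^'k) set set" where
  "proj_faces Q \<gamma> = {(\<lambda>x. Q *v x) ` g | g. cone_face g \<gamma>}"

definition is_bunch :: "real^'r^'k \<Rightarrow> (real^'r) set \<Rightarrow> (real^'k) set set \<Rightarrow> bool" where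
  "is_bunch Q \<gamma> \<Theta> \<longleftrightarrow> \<Theta> \<noteq> {} \<and> \<Theta> \<subseteq> proj_faces Q \<gamma> \<and>
     (\<forall>\<tau>0\<in>proj_faces Q \<gamma>. \<tau>0 \<in> \<Theta> \<longleftrightarrow>
        (\<forall>\<tau>\<in>\<Theta> - {\<tau>0}. rel_interior \<tau>0 \<inter> rel_interior \<tau> \<noteq> {} \<and>
                        rel_interior \<tau>0 \<inter> rel_interior \<tau> \<noteq> rel_interior \<tau>))"

definition cov :: "real^'r^'k \<Rightarrow> (real^'r) set \<Rightarrow> (real^'k) set set \<Rightarrow> (real^'r) set set" where
  "cov Q \<gamma> \<Theta> = {g. cone_face g \<gamma> \<and> (\<exists>\<tau>\<in>\<Theta>. \<tau> \<subseteq> (\<lambda>x. Q *v x) ` g) \<and>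
      (\<forall>g'. cone_face g' g \<and> (\<exists>\<tau>\<in>\<Theta>. \<tau> \<subseteq> (\<lambda>x. Q *v x) ` g') \<longrightarrow> g' = g)}"

definition facet :: "('a::euclidean_space) set \<Rightarrow> 'a set \<Rightarrow> bool" where
  "facet g C \<longleftrightarrow> g face_of C \<and> aff_dim g = aff_dim C - 1"

definition ray :: "('a::euclidean_space) set \<Rightarrow> 'a set \<Rightarrow> bool" where
  "ray \<rho> C \<longleftrightarrow> cone_face \<rho> C \<and> aff_dim \<rho> = 1"

definition is_standard :: "real^'r^'k \<Rightarrow> (real^'r) set \<Rightarrow> (real^'k) set set \<Rightarrow> bool" where
  "is_standard Q \<gamma> \<Theta> \<longleftrightarrow>
     (\<forall>g. facet g \<gamma> \<longrightarrow>
        (\<lambda>x. Q *v x) ` (span g \<inter> lattice_pts) = lattice_pts \<and>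
        (\<exists>\<tau>\<in>\<Theta>. rel_interior \<tau> \<subseteq> rel_interior ((\<lambda>x. Q *v x) ` g)))"

definition dual_cone :: "(real^'r) set \<Rightarrow> (real^'r) set" where
  "dual_cone C = {u. \<forall>x\<in>C. 0 \<le> u \<bullet> x}"

definition perp_face :: "(real^'r) set \<Rightarrow> (real^'r) set \<Rightarrow> (real^'r) set" where
  "perp_face \<gamma> g = {u \<in> dual_cone \<gamma>. \<forall>x\<in>g. u \<bullet> x = 0}"

text \<open>The cones sigma of F_Q with sigma a face of gamma_0^* for gamma_0 in cov(Theta);
  their images P(sigma) are the cones of the fan Delta(Theta) in N.\<close>
definition fan_cones_pre :: "real^'r^'k \<Rightarrow> (real^'r) set \<Rightarrow> (real^'k) set set \<Rightarrow> (real^'r) set set" where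
  "fan_cones_pre Q \<gamma> \<Theta> = {\<sigma>. \<exists>g\<in>cov Q \<gamma> \<Theta>. cone_face \<sigma> (perp_face \<gamma> g)}"

text \<open>M = Hom(N,Z) = ker Q. Dual cone of P(sigma) inside M_Q = ker Q_Q, using
  <P u, m> = <u, m> for m in ker Q.\<close>
definition chart_dual :: "real^'r^'k \<Rightarrow> (real^'r) set \<Rightarrow> (real^'r) set" where
  "chart_dual Q \<sigma> = {m. Q *v m = 0 \<and> (\<forall>u\<in>\<sigma>. 0 \<le> u \<bullet> m)}"

text \<open>Global regular functions of the toric variety X_Theta: elements of the Laurent
  polynomial ring K[M] (finitely supported coefficient functions on M) lying in every
  affine chart algebra K[P(sigma)^vee \<inter> M], sigma in Delta(Theta).\<close>
definition global_functions :: "real^'r^'k \<Rightarrow> (real^'r) set \<Rightarrow> (real^'k) set set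
     \<Rightarrow> (real^'r \<Rightarrow> 'a::field) set" where
  "global_functions Q \<gamma> \<Theta> = {f. finite {m. f m \<noteq> 0} \<and>
      (\<forall>m. f m \<noteq> 0 \<longrightarrow> m \<in> lattice_pts \<and> Q *v m = 0) \<and>
      (\<forall>\<sigma>\<in>fan_cones_pre Q \<gamma> \<Theta>. \<forall>m. f m \<noteq> 0 \<longrightarrow> m \<in> chart_dual Q \<sigma>)}"

definition constant_functions :: "(real^'r \<Rightarrow> 'a::field) set" where
  "constant_functions = {f. \<exists>c. f = (\<lambda>m. if m = 0 then c else 0)}"

definition strictly_convex :: "('a::real_vector) set \<Rightarrow> bool" where
  "strictly_convex C \<longleftrightarrow> (\<forall>x. x \<in> C \<and> - x \<in> C \<longrightarrow> x = 0)"

definition alg_closed_field :: "'a::field itself \<Rightarrow> bool" where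
  "alg_closed_field _ \<longleftrightarrow> (\<forall>p::'a poly. 0 < degree p \<longrightarrow> (\<exists>x. poly p x = 0))"

end

theory Submission
  imports Defs
begin


lemma exists_Q_functional:
  "\<exists>\<phi>::real \<Rightarrow> rat. \<phi> 1 = 1 \<and> (\<forall>x y. \<phi> (x+y) = \<phi> x + \<phi> y) \<and> (\<forall>q x. \<phi> (of_rat q * x) = q * \<phi> x)"
proof -
  define sc where "sc = (\<lambda>(q::rat) (x::real). of_rat q * x)"
  have md: "module sc"
    unfolding sc_def by unfold_locales (auto simp: algebra_simps of_rat_add of_rat_mult)
  have vs: "vector_space sc"
    unfolding sc_def by unfold_locales (auto simp: algebra_simps of_rat_add of_rat_mult)
  define H where "H = vector_space.extend_basis sc {1}"
  have ind1: "module.independent sc {1::real}"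
    apply (rule vector_space.independent_insertI[OF vs])
     apply (simp add: module.span_empty[OF md])
    apply (rule module.independent_empty[OF md])
    done
  have H: "{1} \<subseteq> H" "module.independent sc H" "module.span sc H = UNIV"
    using vector_space.extend_basis_superset[OF vs ind1] vector_space.independent_extend_basis[OF vs ind1]
      vector_space.span_extend_basis[OF vs ind1] unfolding H_def by auto
  define \<phi> where "\<phi> x = module.representation sc H x 1" for x
  have "\<phi> 1 = 1"
    unfolding \<phi>_def using module.representation_basis[OF md H(2)] H(1) by auto
  moreover have "\<phi> (x+y) = \<phi> x + \<phi> y" for x y
    unfolding \<phi>_def using module.representation_add[OF md H(2)] H(3) by auto
  moreover have "\<phi> (of_rat q * x) = q * \<phi> x" for q x
    unfolding \<phi>_def using module.representation_scale[OF md H(2), of x q] H(3) by (auto simp: sc_def)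
  ultimately show ?thesis by blast
qed

lemma exists_Q_proj:
  "\<exists>\<psi>::real \<Rightarrow> real. \<psi> 1 = 1 \<and> (\<forall>x y. \<psi> (x+y) = \<psi> x + \<psi> y) \<and>
     (\<forall>q x. q \<in> \<rat> \<longrightarrow> \<psi> (q * x) = q * \<psi> x) \<and> (\<forall>x. \<psi> x \<in> \<rat>)"
proof -
  obtain \<phi> :: "real \<Rightarrow> rat" where p: "\<phi> 1 = 1" "\<And>x y. \<phi> (x+y) = \<phi> x + \<phi> y"
    "\<And>q x. \<phi> (of_rat q * x) = q * \<phi> x"
    using exists_Q_functional by blast
  define \<psi> where "\<psi> x = real_of_rat (\<phi> x)" for x
  have "\<psi> 1 = 1" using p by (simp add: \<psi>_def)
  moreover have "\<psi> (x+y) = \<psi> x + \<psi> y" for x y using p by (simp add: \<psi>_def of_rat_add)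
  moreover have "\<psi> (q * x) = q * \<psi> x" if "q \<in> \<rat>" for q x
    using that p by (auto simp: \<psi>_def of_rat_mult elim!: Rats_cases)
  moreover have "\<psi> x \<in> \<rat>" for x by (simp add: \<psi>_def)
  ultimately show ?thesis by blast
qed

lemma psi_sum:
  fixes \<psi> :: "real \<Rightarrow> real"
  assumes "\<And>x y. \<psi> (x+y) = \<psi> x + \<psi> y" "finite S"
  shows "\<psi> (\<Sum>s\<in>S. f s) = (\<Sum>s\<in>S. \<psi> (f s))"
proof -
  have "\<psi> 0 = \<psi> 0 + \<psi> 0" using assms(1)[of 0 0] by simp
  then have z: "\<psi> 0 = 0" by (metis add_cancel_right_right)
  show ?thesis using assms(2) by (induction S rule: finite_induct) (auto simp: z assms(1))
qed

lemma rat_solution_aux: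
  fixes v :: "'s \<Rightarrow> real^'k" and \<psi> :: "real \<Rightarrow> real"
  assumes fin: "finite S" and vQ: "\<And>s j. s \<in> S \<Longrightarrow> v s $ j \<in> \<rat>"
    and padd: "\<And>x y. \<psi> (x+y) = \<psi> x + \<psi> y"
    and pmul: "\<And>q x. q \<in> \<rat> \<Longrightarrow> \<psi> (q * x) = q * \<psi> x"
    and p1: "\<psi> 1 = 1" and pQ: "\<And>x. \<psi> x \<in> \<rat>"
  shows "\<forall>c. (\<forall>s\<in>S. c s \<ge> 0) \<and> (\<exists>s\<in>S. c s \<noteq> 0) \<and> (\<Sum>s\<in>S. c s *\<^sub>R v s) = 0
      \<and> card {s\<in>S. c s \<noteq> 0} \<le> n \<longrightarrow>
      (\<exists>d. (\<forall>s\<in>S. d s \<in> \<rat> \<and> d s \<ge> 0) \<and> (\<exists>s\<in>S. d s \<noteq> 0) \<and> (\<Sum>s\<in>S. d s *\<^sub>R v s) = 0)"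
proof (induction n)
  case 0
  show ?case
  proof (intro allI impI)
    fix c :: "'s \<Rightarrow> real"
    assume a: "(\<forall>s\<in>S. c s \<ge> 0) \<and> (\<exists>s\<in>S. c s \<noteq> 0) \<and> (\<Sum>s\<in>S. c s *\<^sub>R v s) = 0
      \<and> card {s\<in>S. c s \<noteq> 0} \<le> 0"
    then have "{s\<in>S. c s \<noteq> 0} = {}" using fin by simp
    with a show "\<exists>d. (\<forall>s\<in>S. d s \<in> \<rat> \<and> d s \<ge> 0) \<and> (\<exists>s\<in>S. d s \<noteq> 0) \<and> (\<Sum>s\<in>S. d s *\<^sub>R v s) = 0"
      by auto
  qed
next
  case (Suc n)
  show ?case
  proof (intro allI impI)
    fix c :: "'s \<Rightarrow> real"
    assume a: "(\<forall>s\<in>S. c s \<ge> 0) \<and> (\<exists>s\<in>S. c s \<noteq> 0) \<and> (\<Sum>s\<in>S. c s *\<^sub>R v s) = 0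
      \<and> card {s\<in>S. c s \<noteq> 0} \<le> Suc n"
    then obtain s0 where s0: "s0 \<in> S" "c s0 \<noteq> 0" by auto
    have cpos: "c s0 > 0" using a s0 by force
    define c1 where "c1 s = c s / c s0" for s
    have c1nn: "\<forall>s\<in>S. c1 s \<ge> 0" using a cpos by (auto simp: c1_def)
    have c1s0: "c1 s0 = 1" using cpos by (simp add: c1_def)
    have c1sol: "(\<Sum>s\<in>S. c1 s *\<^sub>R v s) = 0"
    proof -
      have "(\<Sum>s\<in>S. c1 s *\<^sub>R v s) = (1 / c s0) *\<^sub>R (\<Sum>s\<in>S. c s *\<^sub>R v s)"
        by (simp add: c1_def scaleR_sum_right)
      then show ?thesis using a by simp
    qed
    have c1supp: "{s\<in>S. c1 s \<noteq> 0} = {s\<in>S. c s \<noteq> 0}" using cpos by (auto simp: c1_def)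
    define d where "d s = \<psi> (c1 s)" for s
    have "\<psi> 0 = \<psi> 0 + \<psi> 0" using padd[of 0 0] by simp
    then have p0: "\<psi> 0 = 0" by (metis add_cancel_right_right)
    have dsol: "(\<Sum>s\<in>S. d s *\<^sub>R v s) = 0"
    proof (rule vec_eq_iff[THEN iffD2], rule allI)
      fix j
      have "(\<Sum>s\<in>S. d s *\<^sub>R v s) $ j = (\<Sum>s\<in>S. \<psi> (v s $ j * c1 s))"
      proof -
        have "(\<Sum>s\<in>S. d s *\<^sub>R v s) $ j = (\<Sum>s\<in>S. \<psi> (c1 s) * v s $ j)"
          by (simp add: sum_component d_def)
        also have "\<dots> = (\<Sum>s\<in>S. \<psi> (v s $ j * c1 s))"
        proof (rule sum.cong)
          fix s assume "s \<in> S"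
          then show "\<psi> (c1 s) * v s $ j = \<psi> (v s $ j * c1 s)"
            using pmul[OF vQ[of s j]] by (simp add: mult.commute)
        qed simp
        finally show ?thesis .
      qed
      also have "\<dots> = \<psi> (\<Sum>s\<in>S. v s $ j * c1 s)"
        using psi_sum[OF padd fin, of "\<lambda>s. v s $ j * c1 s"] by simp
      also have "(\<Sum>s\<in>S. v s $ j * c1 s) = (\<Sum>s\<in>S. c1 s *\<^sub>R v s) $ j"
        by (simp add: sum_component mult.commute)
      finally show "(\<Sum>s\<in>S. d s *\<^sub>R v s) $ j = 0 $ j" using c1sol p0 by simp
    qed
    show "\<exists>d. (\<forall>s\<in>S. d s \<in> \<rat> \<and> d s \<ge> 0) \<and> (\<exists>s\<in>S. d s \<noteq> 0) \<and> (\<Sum>s\<in>S. d s *\<^sub>R v s) = 0"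
    proof (cases "\<forall>s\<in>S. d s = c1 s")
      case True
      have "\<forall>s\<in>S. c1 s \<in> \<rat> \<and> c1 s \<ge> 0" using True c1nn pQ by (metis d_def)
      moreover have "\<exists>s\<in>S. c1 s \<noteq> 0" using s0(1) c1s0 by (intro bexI[of _ s0]) simp_all
      ultimately show ?thesis using c1sol by blast
    next
      case False
      define e where "e s = c1 s - d s" for s
      have esol: "(\<Sum>s\<in>S. e s *\<^sub>R v s) = 0"
        using c1sol dsol by (simp add: e_def scaleR_diff_left sum_subtractf)
      have es0: "e s0 = 0" using c1s0 p1 by (simp add: e_def d_def)
      have esupp: "s \<in> S \<Longrightarrow> c1 s = 0 \<Longrightarrow> e s = 0" for s by (simp add: e_def d_def p0)
      have enz: "\<exists>s\<in>S. e s \<noteq> 0" using False unfolding e_def by (metis eq_iff_diff_eq_0)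
      define e' where "e' = (if \<exists>s\<in>S. e s > 0 then e else (\<lambda>s. - e s))"
      have e'pos: "\<exists>s\<in>S. e' s > 0"
      proof (cases "\<exists>s\<in>S. e s > 0")
        case True then show ?thesis by (simp add: e'_def)
      next
        case False
        then obtain s where "s \<in> S" "e s < 0" using enz by force
        then show ?thesis using False by (auto simp: e'_def)
      qed
      have e'sol: "(\<Sum>s\<in>S. e' s *\<^sub>R v s) = 0"
        using esol by (auto simp: e'_def sum_negf)
      have e's0: "e' s0 = 0" using es0 by (simp add: e'_def)
      have e'supp: "s \<in> S \<Longrightarrow> c1 s = 0 \<Longrightarrow> e' s = 0" for s using esupp by (simp add: e'_def)
      define P where "P = {s\<in>S. e' s > 0}"
      have Pfin: "finite P" "P \<noteq> {}" using fin e'pos by (auto simp: P_def)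
      define t where "t = Min ((\<lambda>s. c1 s / e' s) ` P)"
      have "t \<in> (\<lambda>s. c1 s / e' s) ` P" unfolding t_def using Pfin by (intro Min_in) auto
      then obtain s1 where s1: "s1 \<in> P" "t = c1 s1 / e' s1" by auto
      have tle: "s \<in> P \<Longrightarrow> t \<le> c1 s / e' s" for s
        unfolding t_def using Pfin by (intro Min_le) auto
      have t0: "t \<ge> 0" using s1 c1nn by (auto simp: P_def)
      define c' where "c' s = c1 s - t * e' s" for s
      have c'nn: "\<forall>s\<in>S. c' s \<ge> 0"
      proof
        fix s assume sS: "s \<in> S"
        show "c' s \<ge> 0"
        proof (cases "e' s > 0")
          case True
          then have "t \<le> c1 s / e' s" using tle sS by (auto simp: P_def)
          then have "t * e' s \<le> c1 s" using True by (simp add: pos_le_divide_eq)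
          then show ?thesis by (simp add: c'_def)
        next
          case False
          then have "t * e' s \<le> 0" using t0 by (simp add: mult_nonneg_nonpos)
          moreover have "c1 s \<ge> 0" using c1nn sS by blast
          ultimately show ?thesis by (simp add: c'_def)
        qed
      qed
      have c'sol: "(\<Sum>s\<in>S. c' s *\<^sub>R v s) = 0"
      proof -
        have "(\<Sum>s\<in>S. c' s *\<^sub>R v s) = (\<Sum>s\<in>S. c1 s *\<^sub>R v s) - t *\<^sub>R (\<Sum>s\<in>S. e' s *\<^sub>R v s)"
          by (simp add: c'_def scaleR_diff_left sum_subtractf scaleR_sum_right)
        then show ?thesis using c1sol e'sol by simp
      qed
      have c's0: "c' s0 = 1" using c1s0 e's0 by (simp add: c'_def)
      have s1S: "s1 \<in> S" "e' s1 > 0" using s1 by (auto simp: P_def)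
      have c's1: "c' s1 = 0" using s1 s1S by (simp add: c'_def)
      have c1s1: "c1 s1 \<noteq> 0" using e'supp s1S by force
      have sub: "{s\<in>S. c' s \<noteq> 0} \<subseteq> {s\<in>S. c1 s \<noteq> 0} - {s1}"
        using e'supp c's1 by (auto simp: c'_def)
      have "card {s\<in>S. c' s \<noteq> 0} \<le> card ({s\<in>S. c1 s \<noteq> 0} - {s1})"
        using sub fin by (intro card_mono) auto
      also have "\<dots> = card {s\<in>S. c1 s \<noteq> 0} - 1"
        using s1S c1s1 fin by (subst card_Diff_singleton) auto
      also have "\<dots> \<le> n"
      proof -
        have "card {s\<in>S. c s \<noteq> 0} \<le> Suc n" using a by blast
        then show ?thesis using c1supp by simp
      qed
      finally have "card {s\<in>S. c' s \<noteq> 0} \<le> n" .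
      moreover have "\<exists>s\<in>S. c' s \<noteq> 0" using c's0 s0(1) by force
      ultimately show ?thesis using Suc.IH c'nn c'sol by blast
    qed
  qed
qed

lemma int_solution:
  fixes v :: "'s \<Rightarrow> real^'k"
  assumes fin: "finite S" and vQ: "\<And>s j. s \<in> S \<Longrightarrow> v s $ j \<in> \<rat>"
    and c: "\<forall>s\<in>S. c s \<ge> 0" "\<exists>s\<in>S. c s \<noteq> 0" "(\<Sum>s\<in>S. c s *\<^sub>R v s) = 0"
  shows "\<exists>d. (\<forall>s\<in>S. d s \<in> \<int> \<and> d s \<ge> 0) \<and> (\<exists>s\<in>S. d s \<noteq> 0) \<and> (\<Sum>s\<in>S. d s *\<^sub>R v s) = 0"
proof -
  obtain \<psi> :: "real \<Rightarrow> real" where p: "\<psi> 1 = 1" "\<And>x y. \<psi> (x+y) = \<psi> x + \<psi> y"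
     "\<And>q x. q \<in> \<rat> \<Longrightarrow> \<psi> (q * x) = q * \<psi> x" "\<And>x. \<psi> x \<in> \<rat>"
    using exists_Q_proj by blast
  have RA: "\<forall>c. (\<forall>s\<in>S. c s \<ge> 0) \<and> (\<exists>s\<in>S. c s \<noteq> 0) \<and> (\<Sum>s\<in>S. c s *\<^sub>R v s) = 0
      \<and> card {s\<in>S. c s \<noteq> 0} \<le> n \<longrightarrow>
      (\<exists>d. (\<forall>s\<in>S. d s \<in> \<rat> \<and> d s \<ge> 0) \<and> (\<exists>s\<in>S. d s \<noteq> 0) \<and> (\<Sum>s\<in>S. d s *\<^sub>R v s) = 0)" for n
    apply (rule rat_solution_aux[where \<psi>=\<psi>])
    using fin vQ p by auto
  have R: "(\<forall>s\<in>S. c s \<ge> 0) \<and> (\<exists>s\<in>S. c s \<noteq> 0) \<and> (\<Sum>s\<in>S. c s *\<^sub>R v s) = 0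
      \<and> card {s\<in>S. c s \<noteq> 0} \<le> card {s\<in>S. c s \<noteq> 0}" using c by simp
  have "\<exists>d. (\<forall>s\<in>S. d s \<in> \<rat> \<and> d s \<ge> 0) \<and> (\<exists>s\<in>S. d s \<noteq> 0) \<and> (\<Sum>s\<in>S. d s *\<^sub>R v s) = 0"
    using RA[rule_format, OF R] .
  then obtain d where d: "\<forall>s\<in>S. d s \<in> \<rat> \<and> d s \<ge> 0" "\<exists>s\<in>S. d s \<noteq> 0" "(\<Sum>s\<in>S. d s *\<^sub>R v s) = 0"
    by blast
  have "\<forall>s\<in>S. \<exists>N::int. N > 0 \<and> of_int N * d s \<in> \<int>"
  proof
    fix s assume "s \<in> S"
    then have "d s \<in> \<rat>" using d by auto
    then obtain a b where ab: "d s = of_int a / of_int b" "b > 0"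
      by (rule Rats_cases') blast
    then have "of_int b * d s = of_int a" by simp
    then have "of_int b * d s \<in> \<int>" by (metis Ints_of_int)
    then show "\<exists>N::int. N > 0 \<and> of_int N * d s \<in> \<int>"
      using ab(2) by blast
  qed
  from bchoice[OF this] obtain N where N': "\<forall>s\<in>S. N s > (0::int) \<and> of_int (N s) * d s \<in> \<int>" by blast
  have N: "N s > 0 \<and> of_int (N s) * d s \<in> \<int>" if "s \<in> S" for s using N' that by blast
  define M where "M = (\<Prod>s\<in>S. N s)"
  have Mpos: "M > 0" unfolding M_def using N by (intro prod_pos) auto
  have MZ: "of_int M * d s \<in> \<int>" if "s \<in> S" for s
  proof -
    have "M = N s * (\<Prod>s'\<in>S-{s}. N s')" unfolding M_def using that fin by (simp add: prod.remove)
    then have "of_int M * d s = of_int (\<Prod>s'\<in>S-{s}. N s') * (of_int (N s) * d s)" by simp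
    moreover have "of_int (\<Prod>s'\<in>S-{s}. N s') \<in> \<int>" by simp
    ultimately show ?thesis using N[OF that] by (metis Ints_mult)
  qed
  show ?thesis
  proof (intro exI[of _ "\<lambda>s. of_int M * d s"] conjI)
    show "\<forall>s\<in>S. of_int M * d s \<in> \<int> \<and> of_int M * d s \<ge> 0"
    proof
      fix s assume "s \<in> S"
      then show "of_int M * d s \<in> \<int> \<and> of_int M * d s \<ge> 0" using MZ d(1) Mpos by simp
    qed
    obtain s where "s \<in> S" "d s \<noteq> 0" using d(2) by blast
    then show "\<exists>s\<in>S. of_int M * d s \<noteq> 0" using Mpos by auto
    have "(\<Sum>s\<in>S. (of_int M * d s) *\<^sub>R v s) = of_int M *\<^sub>R (\<Sum>s\<in>S. d s *\<^sub>R v s)"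
      by (simp add: scaleR_sum_right)
    then show "(\<Sum>s\<in>S. (of_int M * d s) *\<^sub>R v s) = 0" using d by simp
  qed
qed



definition coef :: "'a::euclidean_space set \<Rightarrow> 'a \<Rightarrow> 'a \<Rightarrow> real" where
  "coef B x = (SOME c. x = (\<Sum>b\<in>B. c b *\<^sub>R b))"

lemma coef_repr:
  assumes "finite B" "span B = UNIV"
  shows "x = (\<Sum>b\<in>B. coef B x b *\<^sub>R b)"
proof -
  have "x \<in> span B" using assms by simp
  then have "\<exists>c. x = (\<Sum>b\<in>B. c b *\<^sub>R b)" using span_finite[OF assms(1)] by auto
  then show ?thesis unfolding coef_def by (rule someI_ex)
qed

lemma coef_uniq:
  assumes "finite B" "independent B" "span B = UNIV" "x = (\<Sum>b\<in>B. d b *\<^sub>R b)" "b \<in> B"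
  shows "coef B x b = d b"
proof -
  have "(\<Sum>b\<in>B. (coef B x b - d b) *\<^sub>R b) = 0"
    using coef_repr[OF assms(1,3), of x] assms(4) by (simp add: scaleR_diff_left sum_subtractf)
  moreover have "\<forall>u. \<not> ((\<exists>v\<in>B. u v \<noteq> 0) \<and> (\<Sum>v\<in>B. u v *\<^sub>R v) = 0)"
    using assms(2) dependent_finite[OF assms(1)] by simp
  ultimately have "\<not> (\<exists>v\<in>B. coef B x v - d v \<noteq> 0)"
    using spec[of _ "\<lambda>b. coef B x b - d b"] by blast
  then show ?thesis using assms(5) by simp
qed

locale sbasis =
  fixes B :: "(real^'n) set"
  assumes fin: "finite B" and ind: "independent B" and sp: "span B = UNIV"
begin

lemma repr: "x = (\<Sum>b\<in>B. coef B x b *\<^sub>R b)"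
  using coef_repr[OF fin sp] .

lemma uniq: "x = (\<Sum>b\<in>B. d b *\<^sub>R b) \<Longrightarrow> b \<in> B \<Longrightarrow> coef B x b = d b"
  using coef_uniq[OF fin ind sp] by blast

lemma coef_add: "b \<in> B \<Longrightarrow> coef B (x + y) b = coef B x b + coef B y b"
proof (rule uniq)
  have "(\<Sum>b\<in>B. (coef B x b + coef B y b) *\<^sub>R b) = (\<Sum>b\<in>B. coef B x b *\<^sub>R b) + (\<Sum>b\<in>B. coef B y b *\<^sub>R b)"
    by (simp add: scaleR_add_left sum.distrib)
  also have "\<dots> = x + y" using repr[of x, symmetric] repr[of y, symmetric] by simp
  finally show "x + y = (\<Sum>b\<in>B. (coef B x b + coef B y b) *\<^sub>R b)" by simp
qed

lemma coef_scale: "b \<in> B \<Longrightarrow> coef B (a *\<^sub>R x) b = a * coef B x b"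
proof (rule uniq)
  have "(\<Sum>b\<in>B. (a * coef B x b) *\<^sub>R b) = a *\<^sub>R (\<Sum>b\<in>B. coef B x b *\<^sub>R b)"
    by (simp add: scaleR_sum_right)
  also have "\<dots> = a *\<^sub>R x" using repr[of x, symmetric] by simp
  finally show "a *\<^sub>R x = (\<Sum>b\<in>B. (a * coef B x b) *\<^sub>R b)" by simp
qed

lemma coef_zero: "b \<in> B \<Longrightarrow> coef B 0 b = 0"
  using coef_scale[of b 0 0] by simp

lemma coef_diff: "b \<in> B \<Longrightarrow> coef B (x - y) b = coef B x b - coef B y b"
  using coef_add[of b x "-y"] coef_scale[of b "-1" y] by simp

lemma coef_sum:
  assumes "b \<in> B" "finite I"
  shows "coef B (\<Sum>i\<in>I. f i) b = (\<Sum>i\<in>I. coef B (f i) b)"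
  using assms(2) by (induction I rule: finite_induct) (auto simp: coef_zero coef_add assms(1))

lemma coef_basis: "b \<in> B \<Longrightarrow> b' \<in> B \<Longrightarrow> coef B b' b = (if b = b' then 1 else 0)"
proof -
  assume b: "b \<in> B" and b': "b' \<in> B"
  have "b' = (\<Sum>x\<in>B. (if x = b' then 1 else 0) *\<^sub>R x)"
    using b' fin by (simp add: if_distrib[of "\<lambda>c. c *\<^sub>R _"] sum.delta' cong: if_cong)
  from uniq[OF this b] show ?thesis by auto
qed

lemma coef_nonzero: "x \<noteq> 0 \<Longrightarrow> \<exists>b\<in>B. coef B x b \<noteq> 0"
proof (rule ccontr)
  assume "x \<noteq> 0" "\<not> (\<exists>b\<in>B. coef B x b \<noteq> 0)"
  then have "(\<Sum>b\<in>B. coef B x b *\<^sub>R b) = 0" by simp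
  then show False using repr[of x] \<open>x \<noteq> 0\<close> by simp
qed

lemma dual_vec: "b \<in> B \<Longrightarrow> \<exists>u. \<forall>x. u \<bullet> x = coef B x b"
proof -
  assume b: "b \<in> B"
  define u where "u = (\<Sum>i\<in>Basis. coef B i b *\<^sub>R i)"
  have "u \<bullet> x = coef B x b" for x
  proof -
    have "u \<bullet> x = (\<Sum>i\<in>Basis. coef B i b * (i \<bullet> x))"
      by (simp add: u_def inner_sum_left)
    also have "\<dots> = (\<Sum>i\<in>Basis. coef B ((x \<bullet> i) *\<^sub>R i) b)"
      using b by (simp add: coef_scale inner_commute mult.commute)
    also have "\<dots> = coef B (\<Sum>i\<in>Basis. (x \<bullet> i) *\<^sub>R i) b"
      using b by (simp add: coef_sum)
    finally show ?thesis by (simp add: euclidean_representation)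
  qed
  then show ?thesis by blast
qed

lemma cone_char:
  assumes "B' \<subseteq> B"
  shows "x \<in> gen_cone B' \<longleftrightarrow> (\<forall>b\<in>B'. coef B x b \<ge> 0) \<and> (\<forall>b\<in>B-B'. coef B x b = 0)"
proof
  assume "x \<in> gen_cone B'"
  then obtain c where c: "\<forall>b\<in>B'. 0 \<le> c b" "x = (\<Sum>b\<in>B'. c b *\<^sub>R b)"
    unfolding gen_cone_def by auto
  have "x = (\<Sum>b\<in>B. (if b \<in> B' then c b else 0) *\<^sub>R b)"
    using c(2) assms fin
    by (simp add: if_distrib[of "\<lambda>c. c *\<^sub>R _"] sum.If_cases Int_absorb1 cong: if_cong)
  from uniq[OF this] c(1) assms show "(\<forall>b\<in>B'. coef B x b \<ge> 0) \<and> (\<forall>b\<in>B-B'. coef B x b = 0)"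
    by auto
next
  assume a: "(\<forall>b\<in>B'. coef B x b \<ge> 0) \<and> (\<forall>b\<in>B-B'. coef B x b = 0)"
  have "x = (\<Sum>b\<in>B. coef B x b *\<^sub>R b)" by (rule repr)
  also have "\<dots> = (\<Sum>b\<in>B'. coef B x b *\<^sub>R b)"
    using a assms fin by (intro sum.mono_neutral_right) auto
  finally show "x \<in> gen_cone B'" unfolding gen_cone_def using a by auto
qed


lemma cone_sub: "B' \<subseteq> B \<Longrightarrow> gen_cone B' \<subseteq> gen_cone B"
proof
  fix x assume B': "B' \<subseteq> B" and x: "x \<in> gen_cone B'"
  have "coef B x b \<ge> 0" if "b \<in> B" for b
  proof (cases "b \<in> B'")
    case True then show ?thesis using x cone_char[OF B'] by blast
  next
    case False then show ?thesis using x cone_char[OF B'] that by force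
  qed
  then show "x \<in> gen_cone B" using cone_char[of B x] by simp
qed

lemma zero_in: "B' \<subseteq> B \<Longrightarrow> 0 \<in> gen_cone B'"
proof -
  assume B': "B' \<subseteq> B"
  have "\<forall>b\<in>B. coef B 0 b = 0" using coef_zero by simp
  then show ?thesis using cone_char[OF B', of 0] B' by auto
qed

lemma basis_in: "B' \<subseteq> B \<Longrightarrow> b \<in> B' \<Longrightarrow> b \<in> gen_cone B'"
proof -
  assume B': "B' \<subseteq> B" and b: "b \<in> B'"
  then have bB: "b \<in> B" by blast
  have "\<forall>b'\<in>B. coef B b b' = (if b' = b then 1 else 0)" using coef_basis bB by simp
  then have "(\<forall>b'\<in>B'. coef B b b' \<ge> 0) \<and> (\<forall>b'\<in>B-B'. coef B b b' = 0)"
    using b B' by auto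
  then show ?thesis using cone_char[OF B', of b] by blast
qed

lemma cone_add: "B' \<subseteq> B \<Longrightarrow> x \<in> gen_cone B' \<Longrightarrow> y \<in> gen_cone B' \<Longrightarrow> x + y \<in> gen_cone B'"
  using cone_char[of B' x] cone_char[of B' y] cone_char[of B' "x+y"] by (auto simp: coef_add)

lemma cone_scale: "B' \<subseteq> B \<Longrightarrow> x \<in> gen_cone B' \<Longrightarrow> a \<ge> 0 \<Longrightarrow> a *\<^sub>R x \<in> gen_cone B'"
  using cone_char[of B' x] cone_char[of B' "a *\<^sub>R x"] by (auto simp: coef_scale)

lemma cone_convex: "B' \<subseteq> B \<Longrightarrow> convex (gen_cone B')"
  unfolding convex_def using cone_add cone_scale by blast

lemma convex_cone_gen: "B' \<subseteq> B \<Longrightarrow> convex_cone (gen_cone B')"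
  unfolding convex_cone_iff using zero_in cone_add cone_scale by blast

lemma aux_real:
  fixes u p q :: real
  assumes "0 < u" "u < 1" "0 \<le> p" "0 \<le> q" "(1 - u) * p + u * q = 0"
  shows "p = 0 \<and> q = 0"
proof -
  have "(1 - u) * p \<ge> 0" "u * q \<ge> 0" using assms by auto
  then have "(1 - u) * p = 0" "u * q = 0" using assms(5) by linarith+
  then show ?thesis using assms(1,2) by auto
qed

lemma face_sub: "B' \<subseteq> B \<Longrightarrow> gen_cone B' face_of gen_cone B"
proof -
  assume B': "B' \<subseteq> B"
  have "a \<in> gen_cone B' \<and> c \<in> gen_cone B'"
    if a: "a \<in> gen_cone B" and c: "c \<in> gen_cone B" and x: "x \<in> gen_cone B'"
      and xs: "x \<in> open_segment a c" for a c x
  proof -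
    obtain u where u: "0 < u" "u < 1" "x = (1 - u) *\<^sub>R a + u *\<^sub>R c"
      using xs in_segment(2) by blast
    have ca: "\<forall>b\<in>B. coef B a b \<ge> 0" and cc: "\<forall>b\<in>B. coef B c b \<ge> 0"
      using a c cone_char[of B] by auto
    have "coef B a b = 0 \<and> coef B c b = 0" if "b \<in> B - B'" for b
    proof -
      have "coef B x b = 0" using x that cone_char[OF B'] by auto
      moreover have "coef B x b = (1 - u) * coef B a b + u * coef B c b"
        using u(3) that by (simp add: coef_add coef_scale)
      ultimately show ?thesis using aux_real[OF u(1,2)] ca cc that by auto
    qed
    then show ?thesis using ca cc B' cone_char[OF B'] by auto
  qed
  then show ?thesis unfolding face_of_def using cone_sub[OF B'] cone_convex[OF B'] by blast
qed

lemma face_pos: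
  assumes g: "g face_of gen_cone B" and x: "x \<in> g" and b: "b \<in> B" and pos: "coef B x b > 0"
  shows "b \<in> g"
proof -
  define s where "s = coef B x b"
  have xg: "x \<in> gen_cone B" using g x face_of_imp_subset by blast
  have cx: "\<forall>b'\<in>B. coef B x b' \<ge> 0" using xg cone_char[of B] by auto
  have x0: "x \<noteq> 0" using pos b coef_zero by auto
  have g0: "0 \<in> g"
  proof -
    have "x \<in> open_segment 0 (2 *\<^sub>R x)"
      using x0 unfolding in_segment(2) by (intro conjI exI[of _ "1/2"]) auto
    moreover have "2 *\<^sub>R x \<in> gen_cone B" using cone_scale[of B x 2] xg by simp
    ultimately show ?thesis using face_ofD[OF g _ zero_in[of B] _ x] by auto
  qed
  define y where "y = x - s *\<^sub>R b"
  have yc: "y \<in> gen_cone B"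
  proof -
    have "coef B y b' \<ge> 0" if "b' \<in> B" for b'
      using that b cx by (auto simp: y_def coef_diff coef_scale coef_basis s_def)
    then show ?thesis using cone_char[of B y] by auto
  qed
  define K where "K = s + 1"
  have K: "K > 0" "s / K > 0" "s / K < 1" using pos by (auto simp: K_def s_def)
  define p where "p = K *\<^sub>R b"
  define z where "z = K *\<^sub>R y"
  have pc: "p \<in> gen_cone B" using cone_scale[OF _ basis_in[of B b]] b K by (auto simp: p_def)
  have zc: "z \<in> gen_cone B" using cone_scale[OF _ yc] K by (auto simp: z_def)
  have xe: "x = (1 - s / K) *\<^sub>R z + (s / K) *\<^sub>R p"
  proof -
    have e1: "(1 - s / K) * K = 1" using K(1) by (simp add: K_def field_simps)
    have e2: "(s / K) * K = s" using K(1) by simp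
    have h1: "(1 - s / K) *\<^sub>R z = y" unfolding z_def scaleR_scaleR e1 by simp
    have h2: "(s / K) *\<^sub>R p = s *\<^sub>R b" unfolding p_def scaleR_scaleR e2 by simp
    have h3: "y + s *\<^sub>R b = x" unfolding y_def by simp
    show ?thesis by (subst h1, subst h2, rule h3[symmetric])
  qed
  have pg: "p \<in> g"
  proof (cases "z = p")
    case True
    then have "x = ((1 - s / K) + s / K) *\<^sub>R p" using xe by (simp only: scaleR_add_left)
    then have "x = p" by simp
    then show ?thesis using x by simp
  next
    case False
    then have "x \<in> open_segment z p" unfolding in_segment(2) using xe K by blast
    then show ?thesis using face_ofD[OF g _ zc pc x] by blast
  qed
  have beq: "b = (1 - 1/K) *\<^sub>R 0 + (1/K) *\<^sub>R p" using K by (simp add: p_def)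
  have K1: "0 \<le> 1/K" "1/K \<le> 1" using K pos by (auto simp: K_def s_def)
  have "convex g" using face_of_imp_convex[OF g] .
  then have "(1 - 1/K) *\<^sub>R 0 + (1/K) *\<^sub>R p \<in> g"
    using g0 pg K1 unfolding convex_alt by blast
  then show ?thesis using beq by simp
qed

lemma span_cone: "B' \<subseteq> B \<Longrightarrow> span (gen_cone B') = span B'"
proof -
  assume B': "B' \<subseteq> B"
  have "B' \<subseteq> gen_cone B'" using basis_in[OF B'] by blast
  moreover have "gen_cone B' \<subseteq> span B'"
    unfolding gen_cone_def by (auto intro!: span_sum span_scale simp: span_base)
  ultimately have "span (gen_cone B') \<subseteq> span B'" "span B' \<subseteq> span (gen_cone B')"
    using span_minimal[OF _ subspace_span] span_mono by blast+
  then show ?thesis by (rule subset_antisym)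
qed

lemma aff_dim_cone: "B' \<subseteq> B \<Longrightarrow> aff_dim (gen_cone B') = int (card B')"
proof -
  assume B': "B' \<subseteq> B"
  have h0: "0 \<in> affine hull (gen_cone B')" by (rule hull_inc[OF zero_in[OF B']])
  have "aff_dim (gen_cone B') = int (dim (gen_cone B'))" by (rule aff_dim_zero[OF h0])
  also have "dim (gen_cone B') = dim (span (gen_cone B'))" by (rule dim_span[symmetric])
  also have "\<dots> = dim (span B')" by (simp only: span_cone[OF B'])
  also have "\<dots> = card B'" by (rule dim_span_eq_card_independent[OF independent_mono[OF ind B']])
  finally show ?thesis .
qed

lemma convex_cone_sum:
  assumes "convex_cone S" "finite A" "\<forall>a\<in>A. f a \<in> S"
  shows "sum f A \<in> S"
  using assms(2,3) by (induction A rule: finite_induct)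
    (auto simp: convex_cone_contains_0[OF assms(1)] convex_cone_add[OF assms(1)])

lemma cone_hull: "B' \<subseteq> B \<Longrightarrow> gen_cone B' = convex_cone hull B'"
proof
  assume B': "B' \<subseteq> B"
  show "convex_cone hull B' \<subseteq> gen_cone B'"
    by (rule hull_minimal) (use basis_in[OF B'] convex_cone_gen[OF B'] in blast)+
  show "gen_cone B' \<subseteq> convex_cone hull B'"
  proof
    fix x assume "x \<in> gen_cone B'"
    then obtain c where c: "\<forall>b\<in>B'. 0 \<le> c b" "x = (\<Sum>b\<in>B'. c b *\<^sub>R b)"
      unfolding gen_cone_def by auto
    have "finite B'" using B' fin finite_subset by blast
    have "c b *\<^sub>R b \<in> convex_cone hull B'" if "b \<in> B'" for b
      using c(1) that by (intro convex_cone_scaleR[OF convex_cone_convex_cone_hull] hull_inc) auto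
    then show "x \<in> convex_cone hull B'" unfolding c(2)
      using \<open>finite B'\<close> by (intro convex_cone_sum convex_cone_convex_cone_hull) auto
  qed
qed

end


lemma Qv_int:
  assumes "int_matrix Q" "b \<in> lattice_pts"
  shows "(Q *v b) $ j \<in> \<int>"
  using assms unfolding int_matrix_def lattice_pts_def matrix_vector_mult_def
  by (auto intro!: Ints_sum Ints_mult)

theorem proposition7p4:
  fixes Q :: "real^'r^'k" and \<gamma> :: "(real^'r) set" and \<Theta> :: "(real^'k) set set"
  assumes "alg_closed_field TYPE('K::field_char_0)"
    and "projected_cone Q \<gamma>"
    and "is_bunch Q \<gamma> \<Theta>"
    and "is_standard Q \<gamma> \<Theta>"
  shows "global_functions Q \<gamma> \<Theta> = (constant_functions :: (real^'r \<Rightarrow> 'K) set) \<longleftrightarrow>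
         ((\<forall>\<rho>. ray \<rho> \<gamma> \<longrightarrow> (\<lambda>x. Q *v x) ` \<rho> \<noteq> {0}) \<and>
          strictly_convex ((\<lambda>x. Q *v x) ` \<gamma>))"
proof -
  from assms(2) obtain B where Qint: "int_matrix Q" and Bind: "independent B"
    and Bcard: "card B = CARD('r)" and Blat: "B \<subseteq> lattice_pts" and gam: "\<gamma> = gen_cone B"
    unfolding projected_cone_def by blast
  have finB: "finite B" using Bcard by (metis card_ge_0_finite zero_less_card_finite)
  have spB: "span B = UNIV"
  proof -
    have "card B = dim (UNIV :: (real^'r) set)" using Bcard by simp
    then show ?thesis using card_eq_dim[of B UNIV] Bind finB by auto
  qed
  interpret sb: sbasis B using finB Bind spB by unfold_locales
  define L where "L = (\<lambda>x::real^'r. Q *v x)"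
  have linL: "linear L" unfolding L_def by simp
  have L0: "L 0 = 0" unfolding L_def by simp
  have Lsum: "L (\<Sum>b\<in>S. c b *\<^sub>R b) = (\<Sum>b\<in>S. c b *\<^sub>R L b)" for S :: "(real^'r) set" and c
    unfolding L_def by (simp add: linear_sum[OF matrix_vector_mul_linear] linear_scale[OF matrix_vector_mul_linear] o_def)
  have Lscale: "L (a *\<^sub>R x) = a *\<^sub>R L x" for a x unfolding L_def by (simp add: linear_scale[OF matrix_vector_mul_linear])
  have Ladd: "L (x + y) = L x + L y" for x y unfolding L_def by (simp add: linear_add[OF matrix_vector_mul_linear])
  have Bnz: "b \<noteq> 0" if "b \<in> B" for b using Bind dependent_zero that by blast
  have cone_B: "x \<in> \<gamma> \<longleftrightarrow> (\<forall>b\<in>B. coef B x b \<ge> 0)" for x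
    using sb.cone_char[of B x] gam by simp
  have B_in: "b \<in> \<gamma>" if "b \<in> B" for b using sb.basis_in[of B b] that gam by simp

  have EX: "global_functions Q \<gamma> \<Theta> \<noteq> (constant_functions :: (real^'r \<Rightarrow> 'K) set)"
    if m: "m \<in> lattice_pts" "m \<in> \<gamma>" "L m = 0" "m \<noteq> 0" for m
  proof
    define f :: "real^'r \<Rightarrow> 'K" where "f = (\<lambda>x. if x = m then 1 else 0)"
    assume eq: "global_functions Q \<gamma> \<Theta> = (constant_functions :: (real^'r \<Rightarrow> 'K) set)"
    have supp: "x = m" if "f x \<noteq> 0" for x using that by (simp add: f_def split: if_splits)
    have G1: "finite {x. f x \<noteq> 0}" by (simp add: f_def)
    have G2: "\<forall>x. f x \<noteq> 0 \<longrightarrow> x \<in> lattice_pts \<and> Q *v x = 0"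
      using supp m by (auto simp: L_def)
    have G3: "\<forall>\<sigma>\<in>fan_cones_pre Q \<gamma> \<Theta>. \<forall>x. f x \<noteq> 0 \<longrightarrow> x \<in> chart_dual Q \<sigma>"
    proof (intro ballI allI impI)
      fix \<sigma> x assume "\<sigma> \<in> fan_cones_pre Q \<gamma> \<Theta>" "f x \<noteq> 0"
      then have x: "x = m" using supp by blast
      from \<open>\<sigma> \<in> fan_cones_pre Q \<gamma> \<Theta>\<close> obtain g where "cone_face \<sigma> (perp_face \<gamma> g)"
        unfolding fan_cones_pre_def by blast
      then have "\<sigma> \<subseteq> perp_face \<gamma> g" unfolding cone_face_def using face_of_imp_subset by blast
      then have "\<forall>u\<in>\<sigma>. 0 \<le> u \<bullet> m" using m(2) unfolding perp_face_def dual_cone_def by blast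
      then show "x \<in> chart_dual Q \<sigma>" using x m(3) unfolding chart_dual_def L_def by simp
    qed
    have "f \<in> global_functions Q \<gamma> \<Theta>"
      unfolding global_functions_def using G1 G2 G3 by blast
    then have "f \<in> constant_functions" using eq by simp
    then obtain c where "f = (\<lambda>x. if x = 0 then c else 0)" unfolding constant_functions_def by blast
    then have "f m = 0" using m(4) by simp
    then show False by (simp add: f_def)
  qed

  have LAT: "\<exists>m. m \<in> lattice_pts \<and> m \<in> \<gamma> \<and> L m = 0 \<and> m \<noteq> 0"
    if x: "x \<in> \<gamma>" "L x = 0" "x \<noteq> 0" for x
  proof -
    have c1: "\<forall>b\<in>B. coef B x b \<ge> 0" using x(1) cone_B by blast
    have c2: "\<exists>b\<in>B. coef B x b \<noteq> 0" using sb.coef_nonzero x(3) by blast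
    have c3: "(\<Sum>b\<in>B. coef B x b *\<^sub>R L b) = 0"
    proof -
      have "L x = L (\<Sum>b\<in>B. coef B x b *\<^sub>R b)" using sb.repr[of x] by (rule arg_cong[where f=L])
      then show ?thesis using x(2) Lsum[where S=B and c="coef B x"] by simp
    qed
    have vQ: "L b $ j \<in> \<rat>" if "b \<in> B" for b j
      using Qv_int[OF Qint, of b j] Blat that Ints_subset_Rats unfolding L_def by blast
    obtain d where d: "\<forall>b\<in>B. d b \<in> \<int> \<and> d b \<ge> 0" "\<exists>b\<in>B. d b \<noteq> 0"
        "(\<Sum>b\<in>B. d b *\<^sub>R L b) = 0"
      using int_solution[OF finB vQ c1 c2 c3] by blast
    define m where "m = (\<Sum>b\<in>B. d b *\<^sub>R b)"
    have "m \<in> lattice_pts"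
      unfolding lattice_pts_def m_def
    proof (intro CollectI allI)
      fix i
      have "(\<Sum>b\<in>B. d b *\<^sub>R b) $ i = (\<Sum>b\<in>B. d b * b $ i)" by (simp add: sum_component)
      also have "\<dots> \<in> \<int>" using d(1) Blat unfolding lattice_pts_def by (intro Ints_sum Ints_mult) auto
      finally show "(\<Sum>b\<in>B. d b *\<^sub>R b) $ i \<in> \<int>" .
    qed
    moreover have "m \<in> \<gamma>" unfolding gam gen_cone_def m_def using d(1) by auto
    moreover have "L m = 0" unfolding m_def using Lsum[where S=B and c=d] d(3) by simp
    moreover have "m \<noteq> 0"
    proof
      assume "m = 0"
      obtain b where b: "b \<in> B" "d b \<noteq> 0" using d(2) by blast
      have "coef B m b = d b" using sb.uniq[OF m_def b(1)] .
      then show False using \<open>m = 0\<close> sb.coef_zero[OF b(1)] b(2) by simp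
    qed
    ultimately show ?thesis by blast
  qed

  show ?thesis
    unfolding L_def[symmetric]
  proof
    assume eq: "global_functions Q \<gamma> \<Theta> = (constant_functions :: (real^'r \<Rightarrow> 'K) set)"
    have H1: "L ` \<rho> \<noteq> {0}" if r: "ray \<rho> \<gamma>" for \<rho>
    proof
      assume L\<rho>: "L ` \<rho> = {0}"
      have fr0: "(\<rho> face_of \<gamma> \<and> \<rho> \<noteq> {}) \<and> aff_dim \<rho> = 1"
        using r unfolding ray_def cone_face_def .
      have f1: "\<rho> face_of \<gamma>" by (rule conjunct1[OF conjunct1[OF fr0]])
      have fr: "\<rho> face_of gen_cone B" "\<rho> \<noteq> {}" "aff_dim \<rho> = 1"
        by (rule f1[unfolded gam], rule conjunct2[OF conjunct1[OF fr0]], rule conjunct2[OF fr0])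
      have "\<exists>x\<in>\<rho>. x \<noteq> 0"
      proof (rule ccontr)
        assume "\<not> (\<exists>x\<in>\<rho>. x \<noteq> 0)"
        then have "\<rho> \<subseteq> {0}" by auto
        then have "\<rho> = {} \<or> \<rho> = {0}" by (simp only: subset_singleton_iff)
        then have "\<rho> = {0}" using fr(2) by (simp only: simp_thms)
        then have "aff_dim \<rho> = 0" by (simp only: aff_dim_sing)
        then show False using fr(3) by (simp only: zero_neq_one)
      qed
      then obtain x where x: "x \<in> \<rho>" "x \<noteq> 0" by blast
      have xg: "x \<in> \<gamma>" using x(1) fr(1) face_of_imp_subset gam by blast
      obtain b where b: "b \<in> B" "coef B x b \<noteq> 0" using sb.coef_nonzero[OF x(2)] by blast
      have "coef B x b > 0" using b xg cone_B by force
      then have "b \<in> \<rho>" using sb.face_pos[OF fr(1) x(1) b(1)] by blast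
      then have "L b = 0" using L\<rho> by blast
      then show False using EX[of b] eq b(1) Blat B_in Bnz by blast
    qed
    have H2: "strictly_convex (L ` \<gamma>)"
      unfolding strictly_convex_def
    proof (intro allI impI)
      fix y assume "y \<in> L ` \<gamma> \<and> - y \<in> L ` \<gamma>"
      then obtain a a' where a: "a \<in> \<gamma>" "y = L a" "a' \<in> \<gamma>" "- y = L a'" by blast
      define x where "x = a + a'"
      have xg: "x \<in> \<gamma>" unfolding x_def gam using sb.cone_add[of B a a'] a gam by simp
      have Lx: "L x = 0" unfolding x_def using a Ladd by (metis add.right_inverse)
      show "y = 0"
      proof (cases "x = 0")
        case True
        have "coef B a b = 0" if "b \<in> B" for b
        proof -
          have "coef B a' b = - coef B a b"
            using True that sb.coef_add[OF that, of a a'] sb.coef_zero[OF that] by (simp add: x_def)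
          moreover have "coef B a b \<ge> 0" "coef B a' b \<ge> 0" using a(1,3) cone_B that by auto
          ultimately show ?thesis by simp
        qed
        then have "a = 0" using sb.coef_nonzero by blast
        then show ?thesis using a(2) L0 by simp
      next
        case False
        then show ?thesis using LAT[OF xg Lx] EX eq by blast
      qed
    qed
    show "(\<forall>\<rho>. ray \<rho> \<gamma> \<longrightarrow> L ` \<rho> \<noteq> {0}) \<and> strictly_convex (L ` \<gamma>)"
      using H1 H2 by blast
  next
    assume "(\<forall>\<rho>. ray \<rho> \<gamma> \<longrightarrow> L ` \<rho> \<noteq> {0}) \<and> strictly_convex (L ` \<gamma>)"
    then have H1: "\<And>\<rho>. ray \<rho> \<gamma> \<Longrightarrow> L ` \<rho> \<noteq> {0}" and H2: "strictly_convex (L ` \<gamma>)" by auto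
    show "global_functions Q \<gamma> \<Theta> = (constant_functions :: (real^'r \<Rightarrow> 'K) set)"
    proof
      show "(constant_functions :: (real^'r \<Rightarrow> 'K) set) \<subseteq> global_functions Q \<gamma> \<Theta>"
      proof
        fix f :: "real^'r \<Rightarrow> 'K" assume "f \<in> constant_functions"
        then obtain c where f: "f = (\<lambda>x. if x = 0 then c else 0)" unfolding constant_functions_def by blast
        have "finite {x. f x \<noteq> 0}" unfolding f by (rule finite_subset[of _ "{0}"]) auto
        moreover have "0 \<in> lattice_pts" unfolding lattice_pts_def by simp
        ultimately show "f \<in> global_functions Q \<gamma> \<Theta>"
          unfolding global_functions_def chart_dual_def f by (auto split: if_splits)
      qed
      show "global_functions Q \<gamma> \<Theta> \<subseteq> (constant_functions :: (real^'r \<Rightarrow> 'K) set)"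
      proof
        fix f :: "real^'r \<Rightarrow> 'K" assume fg: "f \<in> global_functions Q \<gamma> \<Theta>"
        have claim: "m = 0" if fm: "f m \<noteq> 0" for m
        proof (rule ccontr)
          assume m0: "m \<noteq> 0"
          have Lm: "L m = 0" using fg fm unfolding global_functions_def L_def by blast
          have hm: "\<And>\<sigma>. \<sigma> \<in> fan_cones_pre Q \<gamma> \<Theta> \<Longrightarrow> m \<in> chart_dual Q \<sigma>"
            using fg fm unfolding global_functions_def by blast
          have K1: "b \<in> g" if g: "g \<in> cov Q \<gamma> \<Theta>" and b: "b \<in> B" "coef B m b < 0" for g b
          proof (rule ccontr)
            assume bg: "b \<notin> g"
            obtain u where u: "\<And>x. u \<bullet> x = coef B x b" using sb.dual_vec[OF b(1)] by blast
            have gf: "g face_of gen_cone B" using g gam unfolding cov_def cone_face_def by blast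
            have pconv: "convex (perp_face \<gamma> g)"
              unfolding convex_def perp_face_def dual_cone_def
              by (auto simp: inner_add_left add_nonneg_nonneg)
            have p0: "0 \<in> perp_face \<gamma> g" unfolding perp_face_def dual_cone_def by simp
            have "perp_face \<gamma> g \<in> fan_cones_pre Q \<gamma> \<Theta>"
              unfolding fan_cones_pre_def cone_face_def using g face_of_refl[OF pconv] p0 by blast
            then have mc: "m \<in> chart_dual Q (perp_face \<gamma> g)" by (rule hm)
            have "u \<in> perp_face \<gamma> g"
              unfolding perp_face_def dual_cone_def
            proof (intro CollectI conjI ballI)
              fix x assume "x \<in> \<gamma>" then show "0 \<le> u \<bullet> x" using u cone_B b(1) by simp
            next
              fix x assume xg: "x \<in> g"
              have "x \<in> \<gamma>" using xg gf face_of_imp_subset gam by blast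
              then have "coef B x b \<ge> 0" using cone_B b(1) by simp
              moreover have "\<not> coef B x b > 0" using sb.face_pos[OF gf xg b(1)] bg by blast
              ultimately show "u \<bullet> x = 0" using u by simp
            qed
            then have "0 \<le> u \<bullet> m" using mc unfolding chart_dual_def by blast
            then show False using u b(2) by simp
          qed
          show False
          proof (cases "\<exists>b\<in>B. coef B m b < 0")
            case True
            then obtain b where b: "b \<in> B" "coef B m b < 0" by blast
            define B' where "B' = B - {b}"
            have B'B: "B' \<subseteq> B" unfolding B'_def by blast
            define \<gamma>b where "\<gamma>b = gen_cone B'"
            have "card B > 0" using b(1) finB card_gt_0_iff by blast
            then have cardB: "card B \<ge> 1" by simp
            have facet: "facet \<gamma>b \<gamma>"
              unfolding facet_def \<gamma>b_def gam
              using sb.face_sub[OF B'B] sb.aff_dim_cone[OF B'B] sb.aff_dim_cone[of B] b cardB finB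
              by (simp add: B'_def of_nat_diff)
            obtain \<tau> where \<tau>: "\<tau> \<in> \<Theta>" "rel_interior \<tau> \<subseteq> rel_interior (L ` \<gamma>b)"
              using assms(4) facet unfolding is_standard_def L_def by blast
            have "\<tau> \<in> proj_faces Q \<gamma>" using assms(3) \<tau>(1) unfolding is_bunch_def by blast
            then obtain g0 where g0: "\<tau> = L ` g0" "cone_face g0 \<gamma>"
              unfolding proj_faces_def L_def by blast
            have \<tau>conv: "convex \<tau>" using g0 linL unfolding cone_face_def
              by (metis convex_linear_image face_of_imp_convex)
            have hull: "\<gamma>b = convex_cone hull B'" unfolding \<gamma>b_def by (rule sb.cone_hull[OF B'B])
            have finB': "finite B'" using finB B'B finite_subset by blast
            have cl: "closed (L ` \<gamma>b)"
              unfolding hull convex_cone_hull_linear_image[OF linL, symmetric]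
              by (rule closed_convex_cone_hull) (use finB' in simp)
            have \<tau>sub: "\<tau> \<subseteq> L ` \<gamma>b"
            proof -
              have "\<tau> \<subseteq> closure \<tau>" by (rule closure_subset)
              also have "\<dots> = closure (rel_interior \<tau>)" using convex_closure_rel_interior[OF \<tau>conv] by simp
              also have "\<dots> \<subseteq> closure (rel_interior (L ` \<gamma>b))" using \<tau>(2) by (rule closure_mono)
              also have "\<dots> \<subseteq> closure (L ` \<gamma>b)" by (rule closure_mono[OF rel_interior_subset])
              also have "\<dots> = L ` \<gamma>b" using cl by (rule closure_closed)
              finally show ?thesis .
            qed
            define F where "F = {g. g face_of \<gamma>b \<and> g \<noteq> {} \<and> (\<exists>\<tau>\<in>\<Theta>. \<tau> \<subseteq> L ` g)}"
            have polyb: "polyhedron \<gamma>b" unfolding hull by (rule polyhedron_convex_cone_hull[OF finB'])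
            have finF: "finite F"
              using finite_polyhedron_faces[OF polyb] by (rule finite_subset[rotated]) (auto simp: F_def)
            have \<gamma>bF: "\<gamma>b \<in> F"
              unfolding F_def using face_of_refl[OF sb.cone_convex[OF B'B]] sb.zero_in[OF B'B] \<tau>(1) \<tau>sub
              by (auto simp: \<gamma>b_def)
            obtain g where gF: "g \<in> F" and gmin: "\<forall>g'\<in>F. g' \<subseteq> g \<longrightarrow> g = g'"
              using finite_has_minimal2[OF finF \<gamma>bF] by blast
            have gfb: "g face_of \<gamma>b" "g \<noteq> {}" "\<exists>\<tau>\<in>\<Theta>. \<tau> \<subseteq> L ` g" using gF unfolding F_def by auto
            have \<gamma>bf: "\<gamma>b face_of \<gamma>" unfolding \<gamma>b_def gam by (rule sb.face_sub[OF B'B])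
            have gcov: "g \<in> cov Q \<gamma> \<Theta>"
              unfolding cov_def cone_face_def L_def[symmetric]
            proof (intro CollectI conjI allI impI)
              show "g face_of \<gamma>" using face_of_trans[OF gfb(1) \<gamma>bf] .
              show "g \<noteq> {}" by (rule gfb(2))
              show "\<exists>\<tau>\<in>\<Theta>. \<tau> \<subseteq> L ` g" by (rule gfb(3))
              fix g' assume g': "(g' face_of g \<and> g' \<noteq> {}) \<and> (\<exists>\<tau>\<in>\<Theta>. \<tau> \<subseteq> L ` g')"
              then have "g' \<in> F" unfolding F_def using face_of_trans[OF _ gfb(1)] by blast
              moreover have "g' \<subseteq> g" using g' face_of_imp_subset by blast
              ultimately show "g' = g" using gmin by blast
            qed
            have "b \<in> g" by (rule K1[OF gcov b])
            then have "b \<in> \<gamma>b" using gfb(1) face_of_imp_subset by blast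
            then have "coef B b b = 0" using sb.cone_char[OF B'B, of b] b(1) unfolding \<gamma>b_def B'_def by blast
            then show False using sb.coef_basis[OF b(1) b(1)] by simp
          next
            case False
            then have cm: "\<forall>b\<in>B. coef B m b \<ge> 0" by force
            then have mg: "m \<in> \<gamma>" using cone_B by blast
            obtain b where b: "b \<in> B" "coef B m b \<noteq> 0" using sb.coef_nonzero[OF m0] by blast
            define s where "s = coef B m b"
            have s: "s > 0" using b cm by (force simp: s_def)
            define y where "y = m - s *\<^sub>R b"
            have yg: "y \<in> \<gamma>"
            proof -
              have "coef B y b' \<ge> 0" if "b' \<in> B" for b'
                using that b cm by (auto simp: y_def sb.coef_diff sb.coef_scale sb.coef_basis s_def)
              then show ?thesis using cone_B by blast
            qed
            have "L m = L y + s *\<^sub>R L b" unfolding y_def using Ladd Lscale by (metis diff_add_cancel)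
            have Lb0: "L b = 0"
            proof -
              have "L b \<in> L ` \<gamma>" using B_in[OF b(1)] by blast
              moreover have "- L b \<in> L ` \<gamma>"
              proof -
                have "(1 / s) *\<^sub>R y \<in> \<gamma>" using sb.cone_scale[of B y "1/s"] yg s gam by simp
                moreover have "- L b = L ((1 / s) *\<^sub>R y)"
                proof -
                  have "L y + s *\<^sub>R L b = 0" using \<open>L m = L y + s *\<^sub>R L b\<close> Lm by simp
                  then have h: "L y = - (s *\<^sub>R L b)" by (simp add: eq_neg_iff_add_eq_0)
                  have "L ((1 / s) *\<^sub>R y) = (1 / s) *\<^sub>R L y" by (rule Lscale)
                  also have "\<dots> = - (((1 / s) * s) *\<^sub>R L b)" by (simp add: h)
                  also have "\<dots> = - L b" using s by simp
                  finally show ?thesis by simp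
                qed
                ultimately show ?thesis by blast
              qed
              ultimately show ?thesis using H2 unfolding strictly_convex_def by blast
            qed
            define \<rho> where "\<rho> = gen_cone {b}"
            have bB: "{b} \<subseteq> B" using b by blast
            have "ray \<rho> \<gamma>"
              unfolding ray_def cone_face_def \<rho>_def gam
              using sb.face_sub[OF bB] sb.zero_in[OF bB] sb.aff_dim_cone[OF bB] by auto
            moreover have "L ` \<rho> = {0}"
            proof -
              have "L x = 0" if xr: "x \<in> \<rho>" for x
              proof -
                obtain c where "x = (\<Sum>b'\<in>{b}. c b' *\<^sub>R b')" using xr unfolding \<rho>_def gen_cone_def by blast
                then have "x = c b *\<^sub>R b" by simp
                then show ?thesis using Lscale Lb0 by simp
              qed
              moreover have "0 \<in> \<rho>" unfolding \<rho>_def by (rule sb.zero_in[OF bB])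
              ultimately show ?thesis using L0 by force
            qed
            ultimately show False using H1 by blast
          qed
        qed
        have "f = (\<lambda>x. if x = 0 then f 0 else 0)" using claim by (auto simp: fun_eq_iff)
        then show "f \<in> constant_functions" unfolding constant_functions_def by blast
      qed
    qed
  qed
qed

end
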